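(* Let $F$ be a distribution function on $[0,1]$ and $X,X_1,X_2,\dots$ i.i.d. with distribution function $F$. Define $(Z_0,r_0)=(0,1)$ and, recursively, $K_n=[Z_n-r_n,Z_n+r_n]$, $p_{n+1}=2r_nX_{n+1}+Z_n-r_n$, $K_{n+1}=K_n\cap[p_{n+1}-1,p_{n+1}+1]$, with $Z_{n+1},r_{n+1}$ the center and half-length of $K_{n+1}$. Assume that for some $\delta>0$, \[ \mathbb P\{2\min\{X,1-X\}\le x\}=x^\delta,\quad x\in[0,1]. \] Then for every $x>0$, \[ \mathbb P\Big\{4n^{1/\delta}\Big(r_n-\tfrac12\Big)>x\Big\}\to e^{-x^\delta}\quad(n\to\infty), \] i.e. $4n^{1/\delta}(r_n-1/2)\xrightarrow{\mathcal D}\mathrm{Weibull}(\delta)$, and for every $\alpha>0$, \[ \lim_{n\to\infty}\mathbb E\Big[4^\alpha n^{\alpha/\delta}\Big(r_n-\tfrac12\Big)^\alpha\Big]=\frac{\alpha}{\delta}\,\Gamma\Big(\frac{\alpha}{\delta}\Big). \]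
   Context: $X_{n+1}$ is independent of $(Z_k,r_k)_{k\le n}$. The Weibull$(\delta)$ distribution has distribution function $1-e^{-x^\delta}$ for $x>0$. $\Gamma$ is the Gamma function. *)

theory Defs
  imports "HOL-Probability.Probability"
begin

text \<open>Given a sample path x, where x n stands for X_(n+1), ZR x n = (Z_n, r_n).\<close>
fun ZR :: "(nat \<Rightarrow> real) \<Rightarrow> nat \<Rightarrow> real \<times> real" where
  "ZR x 0 = (0, 1)"
| "ZR x (Suc n) =
     (let z = fst (ZR x n); r = snd (ZR x n);
          p = 2 * r * x n + z - r;
          a = max (z - r) (p - 1); b = min (z + r) (p + 1)
      in ((a + b) / 2, (b - a) / 2))"

end

theory Submission
  imports Defs "HOL-Probability.Probability"
begin


lemma step_lin:
  fixes r q z :: real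
  assumes "0 \<le> q" "q \<le> r" "r \<le> 1"
  shows "(min (z + r) (2*q + z - r + 1) - max (z - r) (2*q + z - r - 1)) / 2 = min r (1/2 + min q (r - q))"
  using assms by (simp add: min_def max_def)

lemma ZR_snd_Suc:
  assumes "0 \<le> snd (ZR x n)" "snd (ZR x n) \<le> 1" "x n \<in> {0..1}"
  shows "snd (ZR x (Suc n)) = min (snd (ZR x n)) (1/2 + snd (ZR x n) * min (x n) (1 - x n))"
proof -
  define r where "r = snd (ZR x n)"
  define z where "z = fst (ZR x n)"
  define q where "q = r * x n"
  have q: "0 \<le> q" "q \<le> r" using assms unfolding q_def r_def by (auto intro: mult_left_le)
  have m: "r * min (x n) (1 - x n) = min q (r - q)"
    using assms unfolding q_def r_def by (simp add: min_mult_distrib_left right_diff_distrib)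
  have "snd (ZR x (Suc n)) = (min (z + r) (2*q + z - r + 1) - max (z - r) (2*q + z - r - 1)) / 2"
    by (simp add: Let_def r_def z_def q_def mult.assoc)
  also have "\<dots> = min r (1/2 + min q (r - q))"
    by (rule step_lin) (use q assms r_def in auto)
  finally show ?thesis using m r_def by simp
qed


declare ZR.simps(2)[simp del]

definition uu :: "(nat \<Rightarrow> real) \<Rightarrow> nat \<Rightarrow> real" where
  "uu x k = 2 * min (x k) (1 - x k)"

lemma uu_bounds: "x k \<in> {0..1} \<Longrightarrow> 0 \<le> uu x k \<and> uu x k \<le> 1"
  by (auto simp: uu_def min_def)

lemma ZR_path:
  assumes x: "\<forall>k. x k \<in> {0..1}"
  shows "1/2 \<le> snd (ZR x n) \<and> snd (ZR x n) \<le> 1 \<and>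
         snd (ZR x (Suc n)) = min (snd (ZR x n)) (1/2 + snd (ZR x n) * uu x n / 2)"
proof (induction n)
  case 0
  have "snd (ZR x (Suc 0)) = min (snd (ZR x 0)) (1/2 + snd (ZR x 0) * min (x 0) (1 - x 0))"
    using x by (intro ZR_snd_Suc) auto
  then show ?case by (simp add: uu_def)
next
  case (Suc n)
  let ?r = "snd (ZR x n)"
  have m: "0 \<le> uu x n" "uu x n \<le> 1" using uu_bounds x by auto
  have "1/2 \<le> snd (ZR x (Suc n)) \<and> snd (ZR x (Suc n)) \<le> 1"
    using Suc m by (auto simp: min_def mult_nonneg_nonneg)
  moreover have "snd (ZR x (Suc (Suc n))) = min (snd (ZR x (Suc n))) (1/2 + snd (ZR x (Suc n)) * min (x (Suc n)) (1 - x (Suc n)))"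
    using x calculation by (intro ZR_snd_Suc) auto
  ultimately show ?case by (simp add: uu_def)
qed

lemma ZR_mono:
  assumes x: "\<forall>k. x k \<in> {0..1}" and "j \<le> n"
  shows "snd (ZR x n) \<le> snd (ZR x j)"
  using assms(2)
proof (induction n rule: dec_induct)
  case (step m)
  then show ?case using ZR_path[OF x, of m] by linarith
qed simp

lemma ZR_lower:
  assumes x: "\<forall>k. x k \<in> {0..1}" and c: "c < 2" and u: "\<forall>k<n. c < uu x k"
  shows "c < 4 * (snd (ZR x n) - 1/2)"
  using u
proof (induction n)
  case 0 then show ?case using c by simp
next
  case (Suc n)
  have IH: "c < 4 * (snd (ZR x n) - 1/2)" using Suc by auto
  have cu: "c < uu x n" using Suc by auto
  have P: "1/2 \<le> snd (ZR x n)" "snd (ZR x (Suc n)) = min (snd (ZR x n)) (1/2 + snd (ZR x n) * uu x n / 2)"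
    using ZR_path[OF x, of n] by auto
  have u0: "0 \<le> uu x n" using uu_bounds x by auto
  have "1/2 * uu x n \<le> snd (ZR x n) * uu x n" by (rule mult_right_mono[OF P(1) u0])
  moreover have "snd (ZR x (Suc n)) - 1/2 = min (snd (ZR x n) - 1/2) (snd (ZR x n) * uu x n / 2)"
    using P(2) by (simp add: min_def)
  ultimately show ?case using IH cu by (simp add: min_def ac_simps)
qed

lemma ZR_upper:
  assumes x: "\<forall>k. x k \<in> {0..1}" and "j \<le> k" "k < n"
  shows "4 * (snd (ZR x n) - 1/2) \<le> 2 * snd (ZR x j) * uu x k"
proof -
  have P: "snd (ZR x (Suc k)) = min (snd (ZR x k)) (1/2 + snd (ZR x k) * uu x k / 2)"
    using ZR_path[OF x, of k] by auto
  have "snd (ZR x n) \<le> snd (ZR x (Suc k))" using assms by (intro ZR_mono) auto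
  also have "\<dots> \<le> 1/2 + snd (ZR x k) * uu x k / 2" using P by simp
  also have "snd (ZR x k) * uu x k \<le> snd (ZR x j) * uu x k"
    using ZR_mono[OF x \<open>j \<le> k\<close>] uu_bounds x by (intro mult_right_mono) auto
  finally show ?thesis by simp
qed

lemma ZR_upper0:
  assumes x: "\<forall>k. x k \<in> {0..1}" and "k < n"
  shows "4 * (snd (ZR x n) - 1/2) \<le> 2 * uu x k"
  using ZR_upper[OF x _ assms(2), of 0] by simp


definition wt :: "real \<Rightarrow> real \<Rightarrow> real" where
  "wt \<alpha> y = (if 0 < y then \<alpha> * y powr (\<alpha> - 1) else 0)"

lemma wt_nonneg: "\<alpha> > 0 \<Longrightarrow> 0 \<le> wt \<alpha> y"
  by (simp add: wt_def)

lemma wt_meas[measurable]: "wt \<alpha> \<in> borel_measurable borel"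
  unfolding wt_def by measurable

lemma powr_integral_ind:
  fixes a \<alpha> :: real
  assumes "\<alpha> > 0" "a \<ge> 0"
  shows "(\<integral>\<^sup>+ y. ennreal (wt \<alpha> y) * indicator {y. y < a} y \<partial>lborel) = ennreal (a powr \<alpha>)"
proof -
  have "((\<lambda>y. \<alpha> * y powr (\<alpha> - 1)) has_integral (a powr \<alpha> - 0 powr \<alpha>)) {0..a}"
  proof (rule fundamental_theorem_of_calculus_interior)
    show "continuous_on {0..a} (\<lambda>y. y powr \<alpha>)"
      using assms by (intro continuous_on_powr') (auto intro: continuous_intros)
    fix x assume "x \<in> {0<..<a}"
    then show "((\<lambda>y. y powr \<alpha>) has_vector_derivative \<alpha> * x powr (\<alpha> - 1)) (at x)"
      by (auto intro!: has_real_derivative_powr simp: has_real_derivative_iff_has_vector_derivative[symmetric])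
  qed (use assms in auto)
  then have I: "((\<lambda>y. \<alpha> * y powr (\<alpha> - 1)) has_integral a powr \<alpha>) {0<..<a}"
    by (simp add: has_integral_Icc_iff_Ioo)
  have "(\<integral>\<^sup>+ y. ennreal (wt \<alpha> y) * indicator {y. y < a} y \<partial>lborel)
      = (\<integral>\<^sup>+ y. ennreal (indicator {0<..<a} y * (\<alpha> * y powr (\<alpha> - 1))) \<partial>lborel)"
    by (intro nn_integral_cong) (auto simp: wt_def indicator_def)
  also have "\<dots> = ennreal (a powr \<alpha>)"
    by (rule nn_integral_has_integral_lebesgue[OF _ I]) (use assms in auto)
  finally show ?thesis .
qed

lemma layer_cake:
  fixes N :: "'b measure" and h :: "'b \<Rightarrow> real" and w :: "'b \<Rightarrow> ennreal"
  assumes N: "sigma_finite_measure N" and \<alpha>: "\<alpha> > 0"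
    and h[measurable]: "h \<in> borel_measurable N" and w[measurable]: "w \<in> borel_measurable N"
    and hpos: "AE t in N. 0 \<le> h t"
  shows "(\<integral>\<^sup>+ t. w t * ennreal (h t powr \<alpha>) \<partial>N)
       = (\<integral>\<^sup>+ y. ennreal (wt \<alpha> y) * (\<integral>\<^sup>+ t. w t * indicator {t \<in> space N. y < h t} t \<partial>N) \<partial>lborel)"
proof -
  interpret N: sigma_finite_measure N by fact
  interpret P: pair_sigma_finite N lborel
    by (intro pair_sigma_finite.intro N) (rule lborel.sigma_finite_measure_axioms)
  have "(\<integral>\<^sup>+ t. w t * ennreal (h t powr \<alpha>) \<partial>N)
     = (\<integral>\<^sup>+ t. w t * (\<integral>\<^sup>+ y. ennreal (wt \<alpha> y) * indicator {y. y < h t} y \<partial>lborel) \<partial>N)"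
    using hpos by (intro nn_integral_cong_AE) (auto simp: powr_integral_ind[OF \<alpha>])
  also have "\<dots> = (\<integral>\<^sup>+ t. (\<integral>\<^sup>+ y. w t * ennreal (wt \<alpha> y) * indicator {y. y < h t} y \<partial>lborel) \<partial>N)"
    by (subst nn_integral_cmult[symmetric]) (auto simp: mult.assoc)
  also have "\<dots> = (\<integral>\<^sup>+ y. (\<integral>\<^sup>+ t. w t * ennreal (wt \<alpha> y) * indicator {y. y < h t} y \<partial>N) \<partial>lborel)"
  proof (rule P.Fubini'[symmetric])
    have "(\<lambda>(t, y). w t * ennreal (wt \<alpha> y) * (if y < h t then 1 else 0)) \<in> borel_measurable (N \<Otimes>\<^sub>M lborel)"
      by measurable
    then show "(\<lambda>(t, y). w t * ennreal (wt \<alpha> y) * indicator {y. y < h t} y) \<in> borel_measurable (N \<Otimes>\<^sub>M lborel)"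
      by (simp add: indicator_def)
  qed
  also have "\<dots> = (\<integral>\<^sup>+ y. ennreal (wt \<alpha> y) * (\<integral>\<^sup>+ t. w t * indicator {t \<in> space N. y < h t} t \<partial>N) \<partial>lborel)"
  proof (intro nn_integral_cong)
    fix y
    have "(\<integral>\<^sup>+ t. w t * ennreal (wt \<alpha> y) * indicator {y. y < h t} y \<partial>N)
        = (\<integral>\<^sup>+ t. ennreal (wt \<alpha> y) * (w t * indicator {t \<in> space N. y < h t} t) \<partial>N)"
      by (intro nn_integral_cong) (auto simp: indicator_def mult_ac)
    also have "\<dots> = ennreal (wt \<alpha> y) * (\<integral>\<^sup>+ t. w t * indicator {t \<in> space N. y < h t} t \<partial>N)"
      by (rule nn_integral_cmult) measurable
    finally show "(\<integral>\<^sup>+ t. w t * ennreal (wt \<alpha> y) * indicator {y. y < h t} y \<partial>N)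
        = ennreal (wt \<alpha> y) * (\<integral>\<^sup>+ t. w t * indicator {t \<in> space N. y < h t} t \<partial>N)" .
  qed
  finally show ?thesis .
qed


lemma exp_tail:
  assumes "b \<ge> 0"
  shows "emeasure (density lborel (exponential_density 1)) {t. b < t} = ennreal (exp (- b))"
proof -
  let ?E = "density lborel (exponential_density 1)"
  interpret E: prob_space ?E by (rule prob_space_exponential_density) simp
  have sp: "space ?E = UNIV" by simp
  have "measure ?E {t. b < t} = measure ?E (space ?E - {..b})"
    by (intro arg_cong[where f="measure ?E"]) auto
  also have "\<dots> = 1 - measure ?E {..b}"
    by (rule E.prob_compl) simp
  also have "measure ?E {..b} = 1 - exp (- b)"
    using emeasure_erlang_density[of 1 0 b] assms
    by (simp add: E.emeasure_eq_measure erlang_CDF_0)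
  finally have "measure ?E {t. b < t} = exp (- b)" by simp
  then show ?thesis by (simp add: E.emeasure_eq_measure)
qed

lemma weibull_integral:
  fixes c \<alpha> \<delta> :: real
  assumes c: "c > 0" and \<alpha>: "\<alpha> > 0" and \<delta>: "\<delta> > 0"
  shows "has_bochner_integral lborel (\<lambda>y. wt \<alpha> y * exp (- ((y / c) powr \<delta>)))
           (c powr \<alpha> * Gamma (\<alpha> / \<delta> + 1))"
proof -
  let ?E = "density lborel (exponential_density 1)"
  interpret E: prob_space ?E by (rule prob_space_exponential_density) simp
  define h where "h t = c * (max 0 t) powr (1 / \<delta>)" for t :: real
  have hm[measurable]: "h \<in> borel_measurable ?E" unfolding h_def by measurable
  have hpos: "0 \<le> h t" for t unfolding h_def using c by simp
  have LC: "(\<integral>\<^sup>+ t. 1 * ennreal (h t powr \<alpha>) \<partial>?E)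
       = (\<integral>\<^sup>+ y. ennreal (wt \<alpha> y) * (\<integral>\<^sup>+ t. 1 * indicator {t \<in> space ?E. y < h t} t \<partial>?E) \<partial>lborel)"
    by (rule layer_cake[OF _ \<alpha> hm]) (auto simp: hpos E.sigma_finite_measure_axioms)
  have R: "ennreal (wt \<alpha> y) * (\<integral>\<^sup>+ t. 1 * indicator {t \<in> space ?E. y < h t} t \<partial>?E)
        = ennreal (wt \<alpha> y * exp (- ((y / c) powr \<delta>)))" for y
  proof (cases "y > 0")
    case False then show ?thesis by (simp add: wt_def)
  next
    case True
    have "{t \<in> space ?E. y < h t} = {t. (y / c) powr \<delta> < t}"
    proof (intro set_eqI iffI)
      fix t assume "t \<in> {t \<in> space ?E. y < h t}"
      then have "y / c < (max 0 t) powr (1 / \<delta>)" using c by (simp add: h_def field_simps)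
      then have "(y / c) powr \<delta> < ((max 0 t) powr (1 / \<delta>)) powr \<delta>"
        using True c \<delta> by (intro powr_less_mono2) auto
      also have "\<dots> = max 0 t" using \<delta> by (simp add: powr_powr)
      finally show "t \<in> {t. (y / c) powr \<delta> < t}"
        using True c by (auto simp: max_def split: if_splits)
    next
      fix t assume "t \<in> {t. (y / c) powr \<delta> < t}"
      then have t: "(y / c) powr \<delta> < t" by simp
      have t0: "0 < t" using t True c by (smt (verit) powr_ge_zero)
      have "y / c = ((y / c) powr \<delta>) powr (1 / \<delta>)" using \<delta> True c by (simp add: powr_powr)
      also have "\<dots> < t powr (1 / \<delta>)" using t \<delta> by (intro powr_less_mono2) auto
      finally show "t \<in> {t \<in> space ?E. y < h t}"
        using t0 c by (simp add: h_def field_simps)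
    qed
    then have "(\<integral>\<^sup>+ t. 1 * indicator {t \<in> space ?E. y < h t} t \<partial>?E) = ennreal (exp (- ((y / c) powr \<delta>)))"
      by (simp add: exp_tail del: space_density)
    then show ?thesis using True \<alpha> by (simp add: wt_def ennreal_mult)
  qed
  have L: "(\<integral>\<^sup>+ t. 1 * ennreal (h t powr \<alpha>) \<partial>?E) = ennreal (c powr \<alpha> * Gamma (\<alpha> / \<delta> + 1))"
  proof -
    have "(\<integral>\<^sup>+ t. 1 * ennreal (h t powr \<alpha>) \<partial>?E)
        = (\<integral>\<^sup>+ t. ennreal (exponential_density 1 t) * ennreal (h t powr \<alpha>) \<partial>lborel)"
      by (simp add: nn_integral_density)
    also have "\<dots> = (\<integral>\<^sup>+ t. ennreal (indicator {0..} t * (c powr \<alpha> * (t powr (\<alpha> / \<delta> + 1 - 1) / exp t))) \<partial>lborel)"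
    proof (intro nn_integral_cong)
      fix t :: real
      show "ennreal (exponential_density 1 t) * ennreal (h t powr \<alpha>)
          = ennreal (indicator {0..} t * (c powr \<alpha> * (t powr (\<alpha> / \<delta> + 1 - 1) / exp t)))"
      proof (cases "t \<ge> 0")
        case True
        have "h t powr \<alpha> = c powr \<alpha> * t powr (\<alpha> / \<delta>)"
          using True c by (simp add: h_def powr_mult powr_powr)
        then show ?thesis using True
          by (simp add: exponential_density_def ennreal_mult[symmetric] exp_minus field_simps)
      qed (simp add: exponential_density_def)
    qed
    also have "\<dots> = ennreal (c powr \<alpha> * Gamma (\<alpha> / \<delta> + 1))"
    proof (rule nn_integral_has_integral_lebesgue)
      have G: "((\<lambda>t. t powr (\<alpha> / \<delta> + 1 - 1) / exp t) has_integral Gamma (\<alpha> / \<delta> + 1)) {0..}"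
        using \<alpha> \<delta> by (intro Gamma_integral_real) (simp add: add_pos_pos)
      show "((\<lambda>t. c powr \<alpha> * (t powr (\<alpha> / \<delta> + 1 - 1) / exp t)) has_integral c powr \<alpha> * Gamma (\<alpha> / \<delta> + 1)) {0..}"
        by (rule has_integral_mult_right[OF G])
    qed simp
    finally show ?thesis .
  qed
  have "(\<integral>\<^sup>+ y. ennreal (wt \<alpha> y * exp (- ((y / c) powr \<delta>))) \<partial>lborel) = ennreal (c powr \<alpha> * Gamma (\<alpha> / \<delta> + 1))"
    using LC L R by simp
  then show ?thesis
    using \<alpha> c \<delta>
  proof (intro has_bochner_integral_nn_integral)
    have "0 < Gamma (\<alpha> / \<delta> + 1)" using \<alpha> \<delta> by (intro Gamma_real_pos) (simp add: add_pos_pos)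
    then show "0 \<le> c powr \<alpha> * Gamma (\<alpha> / \<delta> + 1)" by simp
  qed (use \<alpha> in \<open>auto simp: wt_nonneg\<close>)
qed


definition TT :: "(nat \<Rightarrow> 'a \<Rightarrow> real) \<Rightarrow> real \<Rightarrow> nat \<Rightarrow> 'a \<Rightarrow> real" where
  "TT Xs \<delta> n \<omega> = 4 * real n powr (1 / \<delta>) * (snd (ZR (\<lambda>k. Xs k \<omega>) n) - 1/2)"

lemma one_minus_pow_le_exp:
  fixes a :: real and n :: nat
  assumes "0 \<le> a" "a \<le> n" "n \<ge> 1"
  shows "(1 - a / n) ^ n \<le> exp (- a)"
proof -
  have "(1 - a / n) ^ n \<le> exp (- a / n) ^ n"
  proof (intro power_mono)
    have "1 + (- a / n) \<le> exp (- a / n)" by (rule exp_ge_add_one_self)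
    then show "1 - a / n \<le> exp (- a / n)" by simp
    show "0 \<le> 1 - a / n" using assms by (simp add: field_simps)
  qed
  also have "\<dots> = exp (- a)"
    using assms by (simp add: exp_of_nat_mult[symmetric])
  finally show ?thesis .
qed

locale wsetup = prob_space M for M :: "'a measure" +
  fixes X :: "'a \<Rightarrow> real" and Xs :: "nat \<Rightarrow> 'a \<Rightarrow> real" and \<delta> :: real
  assumes X_meas[measurable]: "X \<in> borel_measurable M"
    and indep: "indep_vars (\<lambda>_. borel) Xs UNIV"
    and distr_eq: "\<And>i. distr M borel (Xs i) = distr M borel X"
    and X01: "AE \<omega> in M. X \<omega> \<in> {0..1}"
    and \<delta>pos: "\<delta> > 0"
    and cdf: "\<And>x. x \<in> {0..1} \<Longrightarrow> measure M {\<omega> \<in> space M. 2 * min (X \<omega>) (1 - X \<omega>) \<le> x} = x powr \<delta>"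
begin

lemma Xs_meas[measurable]: "Xs i \<in> borel_measurable M"
  using indep unfolding indep_vars_def by auto

lemma uu_meas[measurable]: "(\<lambda>\<omega>. uu (\<lambda>k. Xs k \<omega>) i) \<in> borel_measurable M"
  unfolding uu_def by measurable

lemma ZR_meas: "(\<lambda>\<omega>. fst (ZR (\<lambda>k. Xs k \<omega>) n)) \<in> borel_measurable M \<and>
                (\<lambda>\<omega>. snd (ZR (\<lambda>k. Xs k \<omega>) n)) \<in> borel_measurable M"
proof (induction n)
  case 0 then show ?case by simp
next
  case (Suc n)
  then have [measurable]: "(\<lambda>\<omega>. fst (ZR (\<lambda>k. Xs k \<omega>) n)) \<in> borel_measurable M"
      "(\<lambda>\<omega>. snd (ZR (\<lambda>k. Xs k \<omega>) n)) \<in> borel_measurable M" by auto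
  show ?case unfolding ZR.simps(2) Let_def by simp measurable
qed

lemma ZR_snd_meas[measurable]: "(\<lambda>\<omega>. snd (ZR (\<lambda>k. Xs k \<omega>) n)) \<in> borel_measurable M"
  using ZR_meas by auto

lemma TT_meas[measurable]: "TT Xs \<delta> n \<in> borel_measurable M"
  unfolding TT_def by measurable

lemma law:
  assumes "A \<in> sets borel"
  shows "prob {\<omega> \<in> space M. Xs i \<omega> \<in> A} = prob {\<omega> \<in> space M. X \<omega> \<in> A}"
proof -
  have "measure (distr M borel (Xs i)) A = measure (distr M borel X) A" by (simp add: distr_eq)
  then show ?thesis using assms
    by (simp add: measure_distr vimage_def Int_def conj_commute)
qed

lemma Xs01: "AE \<omega> in M. Xs i \<omega> \<in> {0..1}"
proof -
  have "AE x in distr M borel X. x \<in> {0..1}"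
    using X01 by (subst AE_distr_iff) auto
  then have "AE x in distr M borel (Xs i). x \<in> {0..1}" unfolding distr_eq .
  then show ?thesis by (subst (asm) AE_distr_iff) auto
qed

lemma G: "AE \<omega> in M. \<forall>k. Xs k \<omega> \<in> {0..1}"
  using Xs01 by (simp add: AE_all_countable)

lemma tail:
  assumes "c \<in> {0..1}"
  shows "prob {\<omega> \<in> space M. c < uu (\<lambda>k. Xs k \<omega>) i} = 1 - c powr \<delta>"
proof -
  have B: "{t::real. c < 2 * min t (1 - t)} \<in> sets borel" by measurable
  have "prob {\<omega> \<in> space M. c < uu (\<lambda>k. Xs k \<omega>) i} = prob {\<omega> \<in> space M. Xs i \<omega> \<in> {t. c < 2 * min t (1 - t)}}"
    by (simp add: uu_def)
  also have "\<dots> = prob {\<omega> \<in> space M. X \<omega> \<in> {t. c < 2 * min t (1 - t)}}"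
    by (rule law[OF B])
  also have "{\<omega> \<in> space M. X \<omega> \<in> {t. c < 2 * min t (1 - t)}} = space M - {\<omega> \<in> space M. 2 * min (X \<omega>) (1 - X \<omega>) \<le> c}"
    by auto
  also have "prob \<dots> = 1 - prob {\<omega> \<in> space M. 2 * min (X \<omega>) (1 - X \<omega>) \<le> c}"
    by (rule prob_compl) measurable
  also have "\<dots> = 1 - c powr \<delta>" using cdf[OF assms] by simp
  finally show ?thesis .
qed

lemma indep_prod:
  assumes "finite I"
  shows "prob {\<omega> \<in> space M. \<forall>k\<in>I. c < uu (\<lambda>k. Xs k \<omega>) k}
       = (\<Prod>k\<in>I. prob {\<omega> \<in> space M. c < uu (\<lambda>k. Xs k \<omega>) k})"
proof (cases "I = {}")
  case True then show ?thesis by (simp add: prob_space)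
next
  case False
  define A where "A = {t::real. c < 2 * min t (1 - t)}"
  have B: "A \<in> sets borel" unfolding A_def by measurable
  have "prob (\<Inter>i\<in>I. Xs i -` A \<inter> space M) = (\<Prod>i\<in>I. prob (Xs i -` A \<inter> space M))"
    using B assms False by (intro indep_varsD[OF indep]) auto
  moreover have "(\<Inter>i\<in>I. Xs i -` A \<inter> space M) = {\<omega> \<in> space M. \<forall>k\<in>I. c < uu (\<lambda>k. Xs k \<omega>) k}"
    using False by (auto simp: A_def uu_def)
  moreover have "\<And>i. Xs i -` A \<inter> space M = {\<omega> \<in> space M. c < uu (\<lambda>k. Xs k \<omega>) i}"
    by (auto simp: A_def uu_def)
  ultimately show ?thesis by simp
qed

lemma indep_pow:
  assumes "finite I" "c \<in> {0..1}"
  shows "prob {\<omega> \<in> space M. \<forall>k\<in>I. c < uu (\<lambda>k. Xs k \<omega>) k} = (1 - c powr \<delta>) ^ card I"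
  using assms by (simp add: indep_prod tail)


lemma powr_div_N:
  assumes "n \<ge> 1" "0 \<le> z"
  shows "(z / real n powr (1 / \<delta>)) powr \<delta> = z powr \<delta> / n"
proof -
  have "(real n powr (1 / \<delta>)) powr \<delta> = real n"
    using assms \<delta>pos by (simp add: powr_powr)
  then show ?thesis using assms by (simp add: powr_divide)
qed

lemma powr_le1:
  assumes "0 \<le> c" "c powr \<delta> \<le> 1" shows "c \<le> 1"
proof (rule ccontr)
  assume "\<not> c \<le> 1"
  then have "1 powr \<delta> < c powr \<delta>" using \<delta>pos by (intro powr_less_mono2) auto
  then show False using assms by simp
qed

lemma TT_eq: "TT Xs \<delta> n \<omega> = real n powr (1 / \<delta>) * (4 * (snd (ZR (\<lambda>k. Xs k \<omega>) n) - 1/2))"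
  by (simp add: TT_def)

end

context wsetup begin
lemma lower_est:
  assumes x: "x > 0" and n: "n \<ge> 1" and xn: "x powr \<delta> \<le> n"
  shows "(1 - x powr \<delta> / n) ^ n \<le> prob {\<omega> \<in> space M. x < TT Xs \<delta> n \<omega>}"
proof -
  define N where "N = real n powr (1 / \<delta>)"
  have N: "N > 0" using n by (simp add: N_def)
  define c where "c = x / N"
  have c0: "0 \<le> c" using x N by (simp add: c_def)
  have cd: "c powr \<delta> = x powr \<delta> / n" unfolding c_def N_def using n x by (intro powr_div_N) auto
  have c1: "c \<le> 1"
  proof (rule powr_le1[OF c0])
    have "x powr \<delta> / real n \<le> 1" using xn n by (simp add: divide_le_eq_1)
    then show "c powr \<delta> \<le> 1" using cd by simp
  qed
  have "(1 - x powr \<delta> / n) ^ n = prob {\<omega> \<in> space M. \<forall>k\<in>{..<n}. c < uu (\<lambda>k. Xs k \<omega>) k}"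
    using c0 c1 by (simp add: indep_pow cd)
  also have "\<dots> \<le> prob {\<omega> \<in> space M. x < TT Xs \<delta> n \<omega>}"
  proof (rule finite_measure_mono_AE)
    show "AE \<omega> in M. \<omega> \<in> {\<omega> \<in> space M. \<forall>k\<in>{..<n}. c < uu (\<lambda>k. Xs k \<omega>) k} \<longrightarrow> \<omega> \<in> {\<omega> \<in> space M. x < TT Xs \<delta> n \<omega>}"
      using G
    proof eventually_elim
      case (elim \<omega>)
      show ?case
      proof
        assume a: "\<omega> \<in> {\<omega> \<in> space M. \<forall>k\<in>{..<n}. c < uu (\<lambda>k. Xs k \<omega>) k}"
        have "c < 4 * (snd (ZR (\<lambda>k. Xs k \<omega>) n) - 1/2)"
          using c1 a elim by (intro ZR_lower) auto
        then have "N * c < N * (4 * (snd (ZR (\<lambda>k. Xs k \<omega>) n) - 1/2))" using N by simp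
        then show "\<omega> \<in> {\<omega> \<in> space M. x < TT Xs \<delta> n \<omega>}"
          using a N by (simp add: TT_eq c_def N_def[symmetric])
      qed
    qed
  qed measurable
  finally show ?thesis .
qed

lemma upper_est:
  assumes x: "x > 0" and e: "\<epsilon> > 0" "2 * \<epsilon> \<le> 1" and k0: "k0 \<le> n" and n: "n \<ge> 1"
    and xn: "(x / (1 + 2 * \<epsilon>)) powr \<delta> \<le> n"
  shows "prob {\<omega> \<in> space M. x < TT Xs \<delta> n \<omega>}
     \<le> (1 - (2 * \<epsilon>) powr \<delta>) ^ k0 + (1 - (x / (1 + 2 * \<epsilon>)) powr \<delta> / n) ^ (n - k0)"
proof -
  define N where "N = real n powr (1 / \<delta>)"
  have N: "N > 0" using n by (simp add: N_def)
  define c where "c = x / (1 + 2 * \<epsilon>) / N"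
  have c0: "0 \<le> c" using x N e by (simp add: c_def)
  have cd: "c powr \<delta> = (x / (1 + 2 * \<epsilon>)) powr \<delta> / n" unfolding c_def N_def using n x e by (intro powr_div_N) auto
  have c1: "c \<le> 1"
  proof (rule powr_le1[OF c0])
    define b where "b = (x / (1 + 2 * \<epsilon>)) powr \<delta>"
    have "b / n \<le> 1" using xn n unfolding b_def[symmetric] by (simp add: field_simps)
    then show "c powr \<delta> \<le> 1" using cd b_def by simp
  qed
  define A where "A = {\<omega> \<in> space M. \<forall>k\<in>{..<k0}. 2 * \<epsilon> < uu (\<lambda>k. Xs k \<omega>) k}"
  define B where "B = {\<omega> \<in> space M. \<forall>k\<in>{k0..<n}. c < uu (\<lambda>k. Xs k \<omega>) k}"
  have [measurable]: "A \<in> sets M" "B \<in> sets M" unfolding A_def B_def by measurable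
  have "prob {\<omega> \<in> space M. x < TT Xs \<delta> n \<omega>} \<le> prob (A \<union> B)"
  proof (rule finite_measure_mono_AE)
    show "AE \<omega> in M. \<omega> \<in> {\<omega> \<in> space M. x < TT Xs \<delta> n \<omega>} \<longrightarrow> \<omega> \<in> A \<union> B"
      using G
    proof eventually_elim
      case (elim \<omega>)
      let ?x = "\<lambda>k. Xs k \<omega>"
      show ?case
      proof
        assume a: "\<omega> \<in> {\<omega> \<in> space M. x < TT Xs \<delta> n \<omega>}"
        then have "N * c * (1 + 2 * \<epsilon>) < N * (4 * (snd (ZR ?x n) - 1/2))"
          using N e by (simp add: TT_eq c_def N_def[symmetric])
        then have a': "c * (1 + 2 * \<epsilon>) < 4 * (snd (ZR ?x n) - 1/2)"
          using N by (simp add: mult.assoc)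
        show "\<omega> \<in> A \<union> B"
        proof (cases "snd (ZR ?x k0) - 1/2 > \<epsilon>")
          case True
          have "\<forall>k\<in>{..<k0}. 2 * \<epsilon> < uu ?x k"
          proof
            fix k assume "k \<in> {..<k0}"
            then have "4 * (snd (ZR ?x k0) - 1/2) \<le> 2 * uu ?x k"
              using elim by (intro ZR_upper0) auto
            then show "2 * \<epsilon> < uu ?x k" using True by simp
          qed
          then show ?thesis using a by (simp add: A_def)
        next
          case False
          have "\<forall>k\<in>{k0..<n}. c < uu ?x k"
          proof
            fix k assume k: "k \<in> {k0..<n}"
            then have "4 * (snd (ZR ?x n) - 1/2) \<le> 2 * snd (ZR ?x k0) * uu ?x k"
              using elim by (intro ZR_upper) auto
            also have "\<dots> \<le> (1 + 2 * \<epsilon>) * uu ?x k"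
              using False uu_bounds[of ?x k] elim by (intro mult_right_mono) auto
            finally have "c * (1 + 2 * \<epsilon>) < uu ?x k * (1 + 2 * \<epsilon>)" using a' by (simp add: mult.commute)
            then show "c < uu ?x k" using e by simp
          qed
          then show ?thesis using a by (simp add: B_def)
        qed
      qed
    qed
  qed measurable
  also have "\<dots> \<le> prob A + prob B" by (rule measure_subadditive) auto
  also have "prob A = (1 - (2 * \<epsilon>) powr \<delta>) ^ k0"
    unfolding A_def using e by (subst indep_pow) auto
  also have "prob B = (1 - (x / (1 + 2 * \<epsilon>)) powr \<delta> / n) ^ (n - k0)"
    unfolding B_def using c0 c1 by (subst indep_pow) (auto simp: cd)
  finally show ?thesis .
qed

lemma dom_est:
  assumes y: "y > 0" and n: "n \<ge> 1"
  shows "prob {\<omega> \<in> space M. y < TT Xs \<delta> n \<omega>} \<le> exp (- ((y / 2) powr \<delta>))"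
proof -
  define N where "N = real n powr (1 / \<delta>)"
  have N: "N > 0" using n by (simp add: N_def)
  define c where "c = y / 2 / N"
  have c0: "0 \<le> c" using y N by (simp add: c_def)
  have cd: "c powr \<delta> = (y / 2) powr \<delta> / n" unfolding c_def N_def using n y by (intro powr_div_N) auto
  define B where "B = {\<omega> \<in> space M. \<forall>k\<in>{..<n}. c < uu (\<lambda>k. Xs k \<omega>) k}"
  have [measurable]: "B \<in> sets M" unfolding B_def by measurable
  have "prob {\<omega> \<in> space M. y < TT Xs \<delta> n \<omega>} \<le> prob B"
  proof (rule finite_measure_mono_AE)
    show "AE \<omega> in M. \<omega> \<in> {\<omega> \<in> space M. y < TT Xs \<delta> n \<omega>} \<longrightarrow> \<omega> \<in> B"
      using G
    proof eventually_elim
      case (elim \<omega>)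
      let ?x = "\<lambda>k. Xs k \<omega>"
      show ?case
      proof
        assume a: "\<omega> \<in> {\<omega> \<in> space M. y < TT Xs \<delta> n \<omega>}"
        then have "N * c * 2 < N * (4 * (snd (ZR ?x n) - 1/2))"
          using N by (simp add: TT_eq c_def N_def[symmetric])
        then have a': "c * 2 < 4 * (snd (ZR ?x n) - 1/2)"
          using N by (simp add: mult.assoc)
        have "\<forall>k\<in>{..<n}. c < uu ?x k"
        proof
          fix k assume "k \<in> {..<n}"
          then have "4 * (snd (ZR ?x n) - 1/2) \<le> 2 * uu ?x k"
            using elim by (intro ZR_upper0) auto
          then show "c < uu ?x k" using a' by simp
        qed
        then show "\<omega> \<in> B" using a by (simp add: B_def)
      qed
    qed
  qed measurable
  also have "\<dots> \<le> exp (- ((y / 2) powr \<delta>))"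
  proof (cases "c \<le> 1")
    case True
    have "prob B = (1 - (y / 2) powr \<delta> / n) ^ n"
      unfolding B_def using c0 True by (subst indep_pow) (auto simp: cd)
    also have "\<dots> \<le> exp (- ((y / 2) powr \<delta>))"
    proof (rule one_minus_pow_le_exp)
      have "c powr \<delta> \<le> 1 powr \<delta>" using c0 True \<delta>pos by (intro powr_mono2) auto
      then show "(y / 2) powr \<delta> \<le> real n" using cd n by (simp add: field_simps)
    qed (use n in auto)
    finally show ?thesis .
  next
    case False
    have "B \<subseteq> {\<omega> \<in> space M. \<forall>k\<in>{..<1::nat}. 1 < uu (\<lambda>k. Xs k \<omega>) k}"
    proof
      fix \<omega> assume "\<omega> \<in> B"
      then have "c < uu (\<lambda>k. Xs k \<omega>) 0" "\<omega> \<in> space M" using n by (auto simp: B_def)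
      then show "\<omega> \<in> {\<omega> \<in> space M. \<forall>k\<in>{..<1::nat}. 1 < uu (\<lambda>k. Xs k \<omega>) k}" using False by auto
    qed
    then have "prob B \<le> prob {\<omega> \<in> space M. \<forall>k\<in>{..<1::nat}. 1 < uu (\<lambda>k. Xs k \<omega>) k}"
      by (intro finite_measure_mono) measurable
    also have "\<dots> = 0" by (subst indep_pow) auto
    finally show ?thesis by (smt (verit) exp_gt_zero)
  qed
  finally show ?thesis .
qed

end


lemma pow_lim: "(\<lambda>n. (1 - B / real n) ^ n) \<longlonglongrightarrow> exp (- B)"
  using tendsto_exp_limit_sequentially[of "- B"] by simp

lemma pow_lim_shift:
  assumes "B \<ge> 0"
  shows "(\<lambda>n. (1 - B / real n) ^ (n - k)) \<longlonglongrightarrow> exp (- B)"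
proof -
  have "(\<lambda>n. B / real n) \<longlonglongrightarrow> 0"
    by (intro tendsto_divide_0[OF tendsto_const] filterlim_at_top_imp_at_infinity filterlim_real_sequentially)
  then have "(\<lambda>n. 1 - B / real n) \<longlonglongrightarrow> 1 - 0" by (intro tendsto_diff tendsto_const)
  from tendsto_power[OF this, of k] have k: "(\<lambda>n. (1 - B / real n) ^ k) \<longlonglongrightarrow> 1" by simp
  have "(\<lambda>n. (1 - B / real n) ^ n / (1 - B / real n) ^ k) \<longlonglongrightarrow> exp (- B) / 1"
    by (intro tendsto_divide pow_lim k) simp
  moreover have "eventually (\<lambda>n. (1 - B / real n) ^ n / (1 - B / real n) ^ k = (1 - B / real n) ^ (n - k)) sequentially"
    using eventually_ge_at_top[of "max k (nat \<lceil>B\<rceil> + 1)"]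
  proof eventually_elim
    case (elim n)
    then have nk: "n = (n - k) + k" by simp
    have "B < real n" using elim by linarith
    then have "1 - B / real n \<noteq> 0" using elim by (simp add: field_simps)
    have "(1 - B / real n) ^ n = (1 - B / real n) ^ (n - k) * (1 - B / real n) ^ k"
      using elim by (simp add: power_add[symmetric])
    moreover have "(1 - B / real n) ^ k \<noteq> 0" by (rule power_not_zero[OF \<open>1 - B / real n \<noteq> 0\<close>])
    ultimately show ?case by (metis nonzero_mult_div_cancel_right)
  qed
  ultimately show ?thesis by (simp add: tendsto_cong)
qed

context wsetup begin

lemma dist_lim:
  assumes x: "x > 0"
  shows "(\<lambda>n. prob {\<omega> \<in> space M. x < TT Xs \<delta> n \<omega>}) \<longlonglongrightarrow> exp (- (x powr \<delta>))"
proof (rule order_tendstoI)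
  fix a assume a: "a < exp (- (x powr \<delta>))"
  have "eventually (\<lambda>n. a < (1 - x powr \<delta> / n) ^ n) sequentially"
    using order_tendstoD(1)[OF pow_lim a] .
  moreover have "eventually (\<lambda>n. n \<ge> max 1 (nat \<lceil>x powr \<delta>\<rceil>)) sequentially"
    by (rule eventually_ge_at_top)
  ultimately show "eventually (\<lambda>n. a < prob {\<omega> \<in> space M. x < TT Xs \<delta> n \<omega>}) sequentially"
  proof eventually_elim
    case (elim n)
    then have "x powr \<delta> \<le> real n" by linarith
    then have "(1 - x powr \<delta> / n) ^ n \<le> prob {\<omega> \<in> space M. x < TT Xs \<delta> n \<omega>}"
      using elim x by (intro lower_est) auto
    then show ?case using elim by simp
  qed
next
  fix a assume a: "exp (- (x powr \<delta>)) < a"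
  define L where "L = exp (- (x powr \<delta>))"
  define e where "e = a - L"
  have e: "e > 0" using a by (simp add: e_def L_def)
  define g where "g \<epsilon> = exp (- ((x / (1 + 2 * \<epsilon>)) powr \<delta>))" for \<epsilon> :: real
  have "(g \<longlongrightarrow> exp (- ((x / (1 + 2 * 0)) powr \<delta>))) (at_right 0)"
    unfolding g_def using x by (intro tendsto_intros) auto
  then have "(g \<longlongrightarrow> L) (at_right 0)" by (simp add: L_def)
  then have ev1: "eventually (\<lambda>\<epsilon>. g \<epsilon> < L + e / 2) (at_right 0)"
    using e by (intro order_tendstoD(2)) auto
  have ev2: "eventually (\<lambda>\<epsilon>. \<epsilon> \<in> {0<..<1/2}) (at_right (0::real))"
    by (rule eventually_at_right_real) simp
  obtain \<epsilon> where \<epsilon>: "g \<epsilon> < L + e / 2" "\<epsilon> \<in> {0<..<1/2}"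
    using eventually_happens[OF eventually_conj[OF ev1 ev2]] by (auto simp: trivial_limit_at_right_real)
  define \<rho> where "\<rho> = 1 - (2 * \<epsilon>) powr \<delta>"
  have "(2 * \<epsilon>) powr \<delta> \<le> 1 powr \<delta>" using \<epsilon> \<delta>pos by (intro powr_mono2) auto
  moreover have "0 < (2 * \<epsilon>) powr \<delta>" using \<epsilon> by simp
  ultimately have \<rho>: "0 \<le> \<rho>" "\<rho> < 1" by (auto simp: \<rho>_def)
  have "(\<lambda>k. \<rho> ^ k) \<longlonglongrightarrow> 0" using \<rho> by (intro LIMSEQ_power_zero) auto
  then have "eventually (\<lambda>k. \<rho> ^ k < e / 4) sequentially"
    using e by (intro order_tendstoD(2)) auto
  then obtain k0 where k0: "\<rho> ^ k0 < e / 4"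
    by (auto simp: eventually_sequentially)
  define B where "B = (x / (1 + 2 * \<epsilon>)) powr \<delta>"
  have B0: "B \<ge> 0" by (simp add: B_def)
  have "(\<lambda>n. \<rho> ^ k0 + (1 - B / real n) ^ (n - k0)) \<longlonglongrightarrow> \<rho> ^ k0 + exp (- B)"
    by (intro tendsto_add tendsto_const pow_lim_shift B0)
  moreover have "\<rho> ^ k0 + exp (- B) < a"
  proof -
    have "g \<epsilon> = exp (- B)" by (simp add: g_def B_def)
    then show ?thesis using k0 \<epsilon>(1) e_def e by linarith
  qed
  ultimately have "eventually (\<lambda>n. \<rho> ^ k0 + (1 - B / real n) ^ (n - k0) < a) sequentially"
    by (rule order_tendstoD(2))
  moreover have "eventually (\<lambda>n. n \<ge> max (max 1 k0) (nat \<lceil>B\<rceil>)) sequentially"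
    by (rule eventually_ge_at_top)
  ultimately show "eventually (\<lambda>n. prob {\<omega> \<in> space M. x < TT Xs \<delta> n \<omega>} < a) sequentially"
  proof eventually_elim
    case (elim n)
    then have "B \<le> real n" by linarith
    then have "prob {\<omega> \<in> space M. x < TT Xs \<delta> n \<omega>} \<le> \<rho> ^ k0 + (1 - B / real n) ^ (n - k0)"
      unfolding \<rho>_def B_def using elim x \<epsilon> by (intro upper_est) auto
    then show ?case using elim by simp
  qed
qed

end


context wsetup begin

definition ff :: "real \<Rightarrow> nat \<Rightarrow> real \<Rightarrow> real" where
  "ff \<alpha> n y = wt \<alpha> y * prob {\<omega> \<in> space M. y < TT Xs \<delta> n \<omega>}"

lemma prob_TT_meas: "(\<lambda>y. prob {\<omega> \<in> space M. y < TT Xs \<delta> n \<omega>}) \<in> borel_measurable borel"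
proof -
  have "mono (\<lambda>y. - prob {\<omega> \<in> space M. y < TT Xs \<delta> n \<omega>})"
  proof (intro monoI)
    fix y y' :: real assume "y \<le> y'"
    then have "prob {\<omega> \<in> space M. y' < TT Xs \<delta> n \<omega>} \<le> prob {\<omega> \<in> space M. y < TT Xs \<delta> n \<omega>}"
      by (intro finite_measure_mono) (auto, measurable)
    then show "- prob {\<omega> \<in> space M. y < TT Xs \<delta> n \<omega>} \<le> - prob {\<omega> \<in> space M. y' < TT Xs \<delta> n \<omega>}"
      by simp
  qed
  then have "(\<lambda>y. - prob {\<omega> \<in> space M. y < TT Xs \<delta> n \<omega>}) \<in> borel_measurable borel"
    by (rule borel_measurable_mono)
  then have "(\<lambda>y. - (- prob {\<omega> \<in> space M. y < TT Xs \<delta> n \<omega>})) \<in> borel_measurable borel"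
    by (rule borel_measurable_uminus)
  then show ?thesis by simp
qed

lemma ff_meas[measurable]: "ff \<alpha> n \<in> borel_measurable lborel"
  unfolding ff_def using prob_TT_meas[of n] by simp measurable

lemma ff_nonneg: "\<alpha> > 0 \<Longrightarrow> 0 \<le> ff \<alpha> n y"
  by (simp add: ff_def wt_nonneg)

lemma ff_bound:
  assumes "\<alpha> > 0"
  shows "ff \<alpha> n y \<le> wt \<alpha> y * exp (- ((y / 2) powr \<delta>))"
proof (cases "y > 0")
  case False then show ?thesis by (simp add: ff_def wt_def)
next
  case y: True
  show ?thesis
  proof (cases "n = 0")
    case True
    then have E0: "{\<omega> \<in> space M. y < TT Xs \<delta> n \<omega>} = {}" using y by (auto simp: TT_def)
    show ?thesis unfolding ff_def E0 using assms by (simp add: wt_nonneg)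
  next
    case False
    then show ?thesis unfolding ff_def
      using dom_est[OF y, of n] wt_nonneg[OF assms, of y] by (intro mult_left_mono) auto
  qed
qed

lemma ff_lim:
  assumes "\<alpha> > 0"
  shows "(\<lambda>n. ff \<alpha> n y) \<longlonglongrightarrow> wt \<alpha> y * exp (- (y powr \<delta>))"
proof (cases "y > 0")
  case False then show ?thesis by (simp add: ff_def wt_def)
next
  case True
  then show ?thesis unfolding ff_def by (intro tendsto_mult tendsto_const dist_lim)
qed

lemma ff_integral_lim:
  assumes \<alpha>: "\<alpha> > 0"
  shows "(\<lambda>n. integral\<^sup>L lborel (ff \<alpha> n)) \<longlonglongrightarrow> Gamma (\<alpha> / \<delta> + 1)"
proof -
  have W1: "has_bochner_integral lborel (\<lambda>y. wt \<alpha> y * exp (- ((y / 1) powr \<delta>))) (1 powr \<alpha> * Gamma (\<alpha> / \<delta> + 1))"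
    using \<alpha> \<delta>pos by (intro weibull_integral) auto
  have W2: "has_bochner_integral lborel (\<lambda>y. wt \<alpha> y * exp (- ((y / 2) powr \<delta>))) (2 powr \<alpha> * Gamma (\<alpha> / \<delta> + 1))"
    using \<alpha> \<delta>pos by (intro weibull_integral) auto
  have "(\<lambda>n. integral\<^sup>L lborel (ff \<alpha> n)) \<longlonglongrightarrow> integral\<^sup>L lborel (\<lambda>y. wt \<alpha> y * exp (- (y powr \<delta>)))"
  proof (rule integral_dominated_convergence[where w="\<lambda>y. wt \<alpha> y * exp (- ((y / 2) powr \<delta>))"])
    show "(\<lambda>y. wt \<alpha> y * exp (- (y powr \<delta>))) \<in> borel_measurable lborel" by measurable
    show "integrable lborel (\<lambda>y. wt \<alpha> y * exp (- ((y / 2) powr \<delta>)))"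
      using W2 by (auto simp: integrable.simps)
    show "AE y in lborel. (\<lambda>n. ff \<alpha> n y) \<longlonglongrightarrow> wt \<alpha> y * exp (- (y powr \<delta>))"
      using ff_lim[OF \<alpha>] by simp
    fix n
    show "AE y in lborel. norm (ff \<alpha> n y) \<le> wt \<alpha> y * exp (- ((y / 2) powr \<delta>))"
      using ff_bound[OF \<alpha>] ff_nonneg[OF \<alpha>] by simp
  qed simp
  also have "integral\<^sup>L lborel (\<lambda>y. wt \<alpha> y * exp (- (y powr \<delta>))) = Gamma (\<alpha> / \<delta> + 1)"
    using has_bochner_integral_integral_eq[OF W1] by simp
  finally show ?thesis .
qed


lemma mom_eq:
  assumes \<alpha>: "\<alpha> > 0" and n: "n \<ge> 1"
  shows "integral\<^sup>L M (\<lambda>\<omega>. 4 powr \<alpha> * real n powr (\<alpha> / \<delta>) * (snd (ZR (\<lambda>k. Xs k \<omega>) n) - 1/2) powr \<alpha>)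
       = integral\<^sup>L lborel (ff \<alpha> n)"
proof -
  have 1: "integral\<^sup>L M (\<lambda>\<omega>. 4 powr \<alpha> * real n powr (\<alpha> / \<delta>) * (snd (ZR (\<lambda>k. Xs k \<omega>) n) - 1/2) powr \<alpha>)
      = integral\<^sup>L M (\<lambda>\<omega>. TT Xs \<delta> n \<omega> powr \<alpha>)"
  proof (rule integral_cong_AE)
    show "AE \<omega> in M. 4 powr \<alpha> * real n powr (\<alpha> / \<delta>) * (snd (ZR (\<lambda>k. Xs k \<omega>) n) - 1/2) powr \<alpha>
        = TT Xs \<delta> n \<omega> powr \<alpha>"
      using G
    proof eventually_elim
      case (elim \<omega>)
      define s where "s = snd (ZR (\<lambda>k. Xs k \<omega>) n) - 1/2"
      have s: "0 \<le> s" using ZR_path[of "\<lambda>k. Xs k \<omega>" n] elim by (simp add: s_def)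
      define N where "N = real n powr (1 / \<delta>)"
      have N: "0 \<le> N" by (simp add: N_def)
      have "TT Xs \<delta> n \<omega> powr \<alpha> = (4 * N * s) powr \<alpha>" by (simp add: TT_def N_def s_def)
      also have "\<dots> = 4 powr \<alpha> * N powr \<alpha> * s powr \<alpha>" using N s by (simp add: powr_mult)
      also have "N powr \<alpha> = real n powr (\<alpha> / \<delta>)" by (simp add: N_def powr_powr)
      finally show ?case by (simp add: s_def)
    qed
  qed measurable
  have 2: "integral\<^sup>L M (\<lambda>\<omega>. TT Xs \<delta> n \<omega> powr \<alpha>) = enn2real (\<integral>\<^sup>+ \<omega>. ennreal (TT Xs \<delta> n \<omega> powr \<alpha>) \<partial>M)"
    by (rule integral_eq_nn_integral) auto
  have hpos: "AE \<omega> in M. 0 \<le> TT Xs \<delta> n \<omega>"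
    using G
  proof eventually_elim
    case (elim \<omega>)
    then show ?case using ZR_path[of "\<lambda>k. Xs k \<omega>" n] by (simp add: TT_def)
  qed
  have LC: "(\<integral>\<^sup>+ \<omega>. 1 * ennreal (TT Xs \<delta> n \<omega> powr \<alpha>) \<partial>M)
      = (\<integral>\<^sup>+ y. ennreal (wt \<alpha> y) * (\<integral>\<^sup>+ t. 1 * indicator {t \<in> space M. y < TT Xs \<delta> n t} t \<partial>M) \<partial>lborel)"
    by (rule layer_cake[OF sigma_finite_measure_axioms \<alpha> TT_meas _ hpos]) simp
  have 3: "(\<integral>\<^sup>+ \<omega>. ennreal (TT Xs \<delta> n \<omega> powr \<alpha>) \<partial>M) = (\<integral>\<^sup>+ y. ennreal (ff \<alpha> n y) \<partial>lborel)"
  proof -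
    have "(\<integral>\<^sup>+ \<omega>. ennreal (TT Xs \<delta> n \<omega> powr \<alpha>) \<partial>M)
        = (\<integral>\<^sup>+ y. ennreal (wt \<alpha> y) * (\<integral>\<^sup>+ t. 1 * indicator {t \<in> space M. y < TT Xs \<delta> n t} t \<partial>M) \<partial>lborel)"
      using LC by simp
    also have "\<dots> = (\<integral>\<^sup>+ y. ennreal (ff \<alpha> n y) \<partial>lborel)"
    proof (intro nn_integral_cong)
      fix y
      have S: "{t \<in> space M. y < TT Xs \<delta> n t} \<in> sets M" by measurable
      have "(\<integral>\<^sup>+ t. 1 * indicator {t \<in> space M. y < TT Xs \<delta> n t} t \<partial>M)
          = ennreal (prob {t \<in> space M. y < TT Xs \<delta> n t})"
        using S by (simp add: emeasure_eq_measure)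
      then show "ennreal (wt \<alpha> y) * (\<integral>\<^sup>+ t. 1 * indicator {t \<in> space M. y < TT Xs \<delta> n t} t \<partial>M)
          = ennreal (ff \<alpha> n y)"
        using \<alpha> by (simp add: ff_def ennreal_mult wt_nonneg)
    qed
    finally show ?thesis .
  qed
  have 4: "integral\<^sup>L lborel (ff \<alpha> n) = enn2real (\<integral>\<^sup>+ y. ennreal (ff \<alpha> n y) \<partial>lborel)"
    by (rule integral_eq_nn_integral) (auto simp: ff_nonneg[OF \<alpha>])
  show ?thesis using 1 2 3 4 by simp
qed

lemma mom_lim:
  assumes \<alpha>: "\<alpha> > 0"
  shows "(\<lambda>n. integral\<^sup>L M (\<lambda>\<omega>. 4 powr \<alpha> * real n powr (\<alpha> / \<delta>) * (snd (ZR (\<lambda>k. Xs k \<omega>) n) - 1/2) powr \<alpha>))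
      \<longlonglongrightarrow> \<alpha> / \<delta> * Gamma (\<alpha> / \<delta>)"
proof -
  have pos: "0 < \<alpha> / \<delta>" using \<alpha> \<delta>pos by simp
  have ni: "\<alpha> / \<delta> \<notin> \<int>\<^sub>\<le>\<^sub>0"
  proof
    assume "\<alpha> / \<delta> \<in> \<int>\<^sub>\<le>\<^sub>0"
    then have "\<alpha> / \<delta> \<le> 0" by (rule nonpos_Ints_nonpos)
    then show False using pos by simp
  qed
  have "(\<lambda>n. integral\<^sup>L lborel (ff \<alpha> n)) \<longlonglongrightarrow> Gamma (\<alpha> / \<delta> + 1)"
    by (rule ff_integral_lim[OF \<alpha>])
  moreover have "eventually (\<lambda>n. integral\<^sup>L lborel (ff \<alpha> n) =
      integral\<^sup>L M (\<lambda>\<omega>. 4 powr \<alpha> * real n powr (\<alpha> / \<delta>) * (snd (ZR (\<lambda>k. Xs k \<omega>) n) - 1/2) powr \<alpha>)) sequentially"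
    using eventually_ge_at_top[of 1] by eventually_elim (rule mom_eq[OF \<alpha>, symmetric], simp)
  ultimately have "(\<lambda>n. integral\<^sup>L M (\<lambda>\<omega>. 4 powr \<alpha> * real n powr (\<alpha> / \<delta>) * (snd (ZR (\<lambda>k. Xs k \<omega>) n) - 1/2) powr \<alpha>))
      \<longlonglongrightarrow> Gamma (\<alpha> / \<delta> + 1)"
    by (rule Lim_transform_eventually)
  then show ?thesis using Gamma_plus1[OF ni] by simp
qed

end

theorem theorem1:
  fixes M :: "'a measure" and X :: "'a \<Rightarrow> real" and Xs :: "nat \<Rightarrow> 'a \<Rightarrow> real"
    and \<delta> :: real
  assumes "prob_space M"
    and "X \<in> borel_measurable M"
    and "prob_space.indep_vars M (\<lambda>_. borel) Xs UNIV"
    and "\<And>i. distr M borel (Xs i) = distr M borel X"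
    and "AE \<omega> in M. X \<omega> \<in> {0..1}"
    and "\<delta> > 0"
    and "\<And>x. x \<in> {0..1} \<Longrightarrow>
           measure M {\<omega> \<in> space M. 2 * min (X \<omega>) (1 - X \<omega>) \<le> x} = x powr \<delta>"
  shows "(\<forall>x>0. (\<lambda>n. measure M {\<omega> \<in> space M.
              4 * real n powr (1 / \<delta>) * (snd (ZR (\<lambda>k. Xs k \<omega>) n) - 1/2) > x})
            \<longlonglongrightarrow> exp (- (x powr \<delta>)))
      \<and> (\<forall>\<alpha>>0. (\<lambda>n. integral\<^sup>L M (\<lambda>\<omega>. 4 powr \<alpha> * real n powr (\<alpha> / \<delta>)
                 * (snd (ZR (\<lambda>k. Xs k \<omega>) n) - 1/2) powr \<alpha>))
            \<longlonglongrightarrow> \<alpha> / \<delta> * Gamma (\<alpha> / \<delta>))"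
proof -
  interpret wsetup M X Xs \<delta>
    using assms by (simp add: wsetup_def wsetup_axioms_def)
  show ?thesis
    using dist_lim mom_lim by (simp add: TT_def)
qed


end
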